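(* Let $V$ be a finite-dimensional real vector space and $F\in\Lambda^4V^*$ a 4-form such that for all $X,Y\in V$: $\iota_XF\wedge F=0$ and $\iota_XF\wedge\iota_YF=0$. Then $\iota_Z\iota_Y\iota_XF\wedge F=0$ for all $X,Y,Z\in V$, and consequently $F$ is decomposable, i.e. $F=\theta_1\wedge\theta_2\wedge\theta_3\wedge\theta_4$ for some $\theta_i\in V^*$.
   Context: $\iota_X$ denotes interior multiplication (contraction) by the vector $X$. A $p$-form is decomposable if it is a wedge product of $p$ one-forms. *)

theory Defs
  imports "HOL-Analysis.Analysis"
begin

text \<open>A p-form is represented as a function on sequences of vectors (nat => 'a) => real
that depends only on the first p arguments, is linear in each of them and alternating.\<close>


definition is_pform :: "nat \<Rightarrow> ((nat \<Rightarrow> 'a::euclidean_space) \<Rightarrow> real) \<Rightarrow> bool" where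
  "is_pform p F \<longleftrightarrow>
     (\<forall>v w. (\<forall>i<p. v i = w i) \<longrightarrow> F v = F w) \<and>
     (\<forall>i<p. \<forall>v. linear (\<lambda>x. F (v(i := x)))) \<and>
     (\<forall>v i j. i < p \<longrightarrow> j < p \<longrightarrow> i \<noteq> j \<longrightarrow> v i = v j \<longrightarrow> F v = 0)"

definition wedge :: "nat \<Rightarrow> nat \<Rightarrow> ((nat \<Rightarrow> 'a) \<Rightarrow> real) \<Rightarrow> ((nat \<Rightarrow> 'a) \<Rightarrow> real)
                      \<Rightarrow> (nat \<Rightarrow> 'a) \<Rightarrow> real" where
  "wedge p q \<alpha> \<beta> = (\<lambda>v. (\<Sum>\<sigma>\<in>{\<sigma>. \<sigma> permutes {..<p+q}}.
        real_of_int (sign \<sigma>) * \<alpha> (\<lambda>i. v (\<sigma> i)) * \<beta> (\<lambda>i. v (\<sigma> (i + p))))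
      / (fact p * fact q))"

definition contract :: "'a \<Rightarrow> ((nat \<Rightarrow> 'a) \<Rightarrow> real) \<Rightarrow> (nat \<Rightarrow> 'a) \<Rightarrow> real" where
  "contract X F = (\<lambda>v. F (\<lambda>i. if i = 0 then X else v (i - 1)))"

definition one_form :: "('a \<Rightarrow> real) \<Rightarrow> (nat \<Rightarrow> 'a) \<Rightarrow> real" where
  "one_form \<theta> = (\<lambda>v. \<theta> (v 0))"

end

theory Submission
  imports Defs
begin

lemma pform_dep: "is_pform p F \<Longrightarrow> (\<And>i. i < p \<Longrightarrow> v i = w i) \<Longrightarrow> F v = F w"
  unfolding is_pform_def by blast

lemma pform_lin: "is_pform p F \<Longrightarrow> i < p \<Longrightarrow> linear (\<lambda>x. F (v(i := x)))"
  unfolding is_pform_def by blast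

lemma pform_alt: "is_pform p F \<Longrightarrow> i < p \<Longrightarrow> j < p \<Longrightarrow> i \<noteq> j \<Longrightarrow> v i = v j \<Longrightarrow> F v = 0"
  unfolding is_pform_def by blast

lemma pform_add: "is_pform p F \<Longrightarrow> i < p \<Longrightarrow> F (v(i := x + y)) = F (v(i := x)) + F (v(i := y))"
  using pform_lin[of p F i v] by (simp add: linear_iff)

lemma pform_swap:
  assumes F: "is_pform p F" and ij: "i < p" "j < p" "i \<noteq> j"
  shows "F (\<lambda>k. v (Transposition.transpose i j k)) = - F v"
proof -
  let ?g = "\<lambda>x y. F (v(i := x, j := y))"
  have s: "?g (x + y) z = ?g x z + ?g y z" for x y z
  proof -
    have "v(i := x + y, j := z) = (v(j := z))(i := x + y)" using ij by (auto simp: fun_eq_iff)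
    moreover have "v(i := x, j := z) = (v(j := z))(i := x)" using ij by (auto simp: fun_eq_iff)
    moreover have "v(i := y, j := z) = (v(j := z))(i := y)" using ij by (auto simp: fun_eq_iff)
    ultimately show ?thesis using pform_add[OF F ij(1), of "v(j := z)" x y] by simp
  qed
  have t: "?g z (x + y) = ?g z x + ?g z y" for x y z
    using pform_add[OF F ij(2), of "v(i := z)" x y] by simp
  have z: "?g x x = 0" for x
    by (rule pform_alt[OF F ij]) (use ij in auto)
  have e: "?g (v i + v j) (v i + v j) = ?g (v i) (v j) + ?g (v j) (v i)"
    unfolding s t using z[of "v i"] z[of "v j"] by simp
  have e1: "?g (v i) (v j) = F v" by (simp add: fun_upd_idem)
  have e2: "v(i := v j, j := v i) = (\<lambda>k. v (Transposition.transpose i j k))"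
    using ij by (auto simp: fun_eq_iff Transposition.transpose_def)
  show ?thesis using e z[of "v i + v j"] unfolding e1 e2 by simp
qed

lemma contract_pform:
  assumes F: "is_pform (Suc p) F"
  shows "is_pform p (contract X F)"
  unfolding is_pform_def contract_def
proof (intro conjI allI impI)
  fix v w :: "nat \<Rightarrow> 'a" assume h: "\<forall>i<p. v i = w i"
  show "F (\<lambda>i. if i = 0 then X else v (i - 1)) = F (\<lambda>i. if i = 0 then X else w (i - 1))"
    by (rule pform_dep[OF F]) (use h in auto)
next
  fix i v assume i: "i < p"
  have e: "(\<lambda>ia. if ia = 0 then X else (v(i := x)) (ia - 1)) = (\<lambda>ia. if ia = 0 then X else v (ia - 1))(Suc i := x)" for x
    by (auto simp: fun_eq_iff)
  show "linear (\<lambda>x. F (\<lambda>ia. if ia = 0 then X else (v(i := x)) (ia - 1)))"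
    unfolding e using pform_lin[OF F, of "Suc i"] i by simp
next
  fix v :: "nat \<Rightarrow> 'a" and i j assume h: "i < p" "j < p" "i \<noteq> j" "v i = v j"
  show "F (\<lambda>i. if i = 0 then X else v (i - 1)) = 0"
    by (rule pform_alt[OF F, of "Suc i" "Suc j"]) (use h in auto)
qed

abbreviation PS :: "nat \<Rightarrow> (nat \<Rightarrow> nat) set" where "PS n \<equiv> {\<sigma>. \<sigma> permutes {..<n}}"

definition wt :: "nat \<Rightarrow> ((nat \<Rightarrow> 'a) \<Rightarrow> real) \<Rightarrow> ((nat \<Rightarrow> 'a) \<Rightarrow> real) \<Rightarrow> (nat \<Rightarrow> 'a) \<Rightarrow> (nat \<Rightarrow> nat) \<Rightarrow> real" where
  "wt p \<alpha> \<beta> v \<sigma> = real_of_int (sign \<sigma>) * \<alpha> (\<lambda>i. v (\<sigma> i)) * \<beta> (\<lambda>i. v (\<sigma> (i + p)))"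

lemma wedge_wt: "wedge p q \<alpha> \<beta> v = (\<Sum>\<sigma>\<in>PS (p+q). wt p \<alpha> \<beta> v \<sigma>) / (fact p * fact q)"
  unfolding wedge_def wt_def by simp

lemma perm_sign_tr: "\<sigma> permutes {..<n::nat} \<Longrightarrow> a < n \<Longrightarrow> b < n \<Longrightarrow> a \<noteq> b \<Longrightarrow>
   sign (\<sigma> \<circ> Transposition.transpose a b) = - sign \<sigma>"
proof -
  assume h: "\<sigma> permutes {..<n}" "a < n" "b < n" "a \<noteq> b"
  have "permutation \<sigma>" by (rule permutes_imp_permutation[OF _ h(1)]) simp
  then show ?thesis using h by (simp only: sign_compose[OF _ permutation_swap_id] sign_swap_id) simp
qed

lemma wt_swap_a:
  assumes "is_pform p \<alpha>" "\<sigma> permutes {..<n}" "a < p" "b < p" "p \<le> n"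
  shows "wt p \<alpha> \<beta> v (\<sigma> \<circ> Transposition.transpose a b) = wt p \<alpha> \<beta> v \<sigma>"
proof (cases "a = b")
  case True then show ?thesis by simp
next
  case False
  have s: "sign (\<sigma> \<circ> Transposition.transpose a b) = - sign \<sigma>" using assms False by (intro perm_sign_tr[OF assms(2)]) auto
  have "\<alpha> (\<lambda>i. v ((\<sigma> \<circ> Transposition.transpose a b) i)) = - \<alpha> (\<lambda>i. v (\<sigma> i))"
    using pform_swap[OF assms(1) assms(3,4) False, of "\<lambda>i. v (\<sigma> i)"] by simp
  moreover have "(\<lambda>i. v ((\<sigma> \<circ> Transposition.transpose a b) (i + p))) = (\<lambda>i. v (\<sigma> (i + p)))"
    using assms by (auto simp: Transposition.transpose_def fun_eq_iff)
  ultimately show ?thesis unfolding wt_def s by simp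
qed

lemma wt_swap_b:
  assumes "is_pform p \<alpha>" "is_pform q \<beta>" "\<sigma> permutes {..<p+q}" "p \<le> a" "p \<le> b" "a < p+q" "b < p+q"
  shows "wt p \<alpha> \<beta> v (\<sigma> \<circ> Transposition.transpose a b) = wt p \<alpha> \<beta> v \<sigma>"
proof (cases "a = b")
  case True then show ?thesis by simp
next
  case False
  have s: "sign (\<sigma> \<circ> Transposition.transpose a b) = - sign \<sigma>" using assms False by (intro perm_sign_tr[OF assms(3)]) auto
  have "\<alpha> (\<lambda>i. v ((\<sigma> \<circ> Transposition.transpose a b) i)) = \<alpha> (\<lambda>i. v (\<sigma> i))"
    by (rule pform_dep[OF assms(1)]) (use assms in \<open>auto simp: Transposition.transpose_def\<close>)
  moreover have "(\<lambda>i. v ((\<sigma> \<circ> Transposition.transpose a b) (i + p))) =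
      (\<lambda>k. (\<lambda>i. v (\<sigma> (i + p))) (Transposition.transpose (a - p) (b - p) k))"
    using assms by (auto simp: Transposition.transpose_def fun_eq_iff)
  moreover have "\<beta> (\<lambda>k. (\<lambda>i. v (\<sigma> (i + p))) (Transposition.transpose (a - p) (b - p) k)) = - \<beta> (\<lambda>i. v (\<sigma> (i + p)))"
    by (rule pform_swap[OF assms(2)]) (use assms False in auto)
  ultimately show ?thesis unfolding wt_def s by simp
qed

lemma sum_fiber:
  assumes "0 < n"
  shows "(\<Sum>\<sigma>\<in>PS n. f \<sigma>) = (\<Sum>k<n. \<Sum>\<sigma>\<in>{\<sigma>\<in>PS n. \<sigma> k = 0}. f \<sigma>)"
proof -
  have fin: "finite (PS n)" by (simp add: finite_permutations)
  have "(\<Sum>k<n. \<Sum>\<sigma>\<in>{\<sigma>\<in>PS n. \<sigma> k = 0}. f \<sigma>) = (\<Sum>k<n. \<Sum>\<sigma>\<in>PS n. if \<sigma> k = 0 then f \<sigma> else 0)"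
    by (rule sum.cong[OF refl], rule sum.inter_filter[OF fin])
  also have "\<dots> = (\<Sum>\<sigma>\<in>PS n. \<Sum>k<n. if \<sigma> k = 0 then f \<sigma> else 0)"
    by (rule sum.swap)
  also have "\<dots> = (\<Sum>\<sigma>\<in>PS n. f \<sigma>)"
  proof (rule sum.cong[OF refl])
    fix \<sigma> assume s: "\<sigma> \<in> PS n"
    hence s': "\<sigma> permutes {..<n}" by simp
    have "(\<Sum>k<n. if \<sigma> k = 0 then f \<sigma> else 0) = (\<Sum>k<n. if inv \<sigma> 0 = k then f \<sigma> else 0)"
      by (rule sum.cong[OF refl]) (auto simp add: permutes_inv_eq[OF s'])
    also have "\<dots> = f \<sigma>"
      using permutes_in_image[OF permutes_inv[OF s'], of 0] assms by simp
    finally show "(\<Sum>k<n. if \<sigma> k = 0 then f \<sigma> else 0) = f \<sigma>" .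
  qed
  finally show ?thesis by simp
qed

lemma fiber_move:
  assumes "j < n" "k < n"
  shows "(\<Sum>\<sigma>\<in>{\<sigma>\<in>PS n. \<sigma> k = 0}. f \<sigma>) = (\<Sum>\<sigma>\<in>{\<sigma>\<in>PS n. \<sigma> j = 0}. f (\<sigma> \<circ> Transposition.transpose j k))"
proof (rule sum.reindex_bij_witness[symmetric, where i="\<lambda>\<sigma>. \<sigma> \<circ> Transposition.transpose j k" and j="\<lambda>\<sigma>. \<sigma> \<circ> Transposition.transpose j k"])
  fix a assume "a \<in> {\<sigma>\<in>PS n. \<sigma> j = 0}"
  then show "a \<circ> Transposition.transpose j k \<circ> Transposition.transpose j k = a"
    and "a \<circ> Transposition.transpose j k \<in> {\<sigma>\<in>PS n. \<sigma> k = 0}"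
    using assms by (auto simp: o_assoc[symmetric] intro!: permutes_compose permutes_swap_id)
next
  fix a assume "a \<in> {\<sigma>\<in>PS n. \<sigma> k = 0}"
  then show "a \<circ> Transposition.transpose j k \<circ> Transposition.transpose j k = a"
    and "a \<circ> Transposition.transpose j k \<in> {\<sigma>\<in>PS n. \<sigma> j = 0}"
    using assms by (auto simp: o_assoc[symmetric] intro!: permutes_compose permutes_swap_id)
qed simp

definition lift :: "(nat \<Rightarrow> nat) \<Rightarrow> nat \<Rightarrow> nat" where
  "lift \<rho> = (\<lambda>i. if i = 0 then 0 else Suc (\<rho> (i - 1)))"

definition unlift :: "(nat \<Rightarrow> nat) \<Rightarrow> nat \<Rightarrow> nat" where
  "unlift \<sigma> = (\<lambda>i. \<sigma> (Suc i) - 1)"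

lemma lift_id: "lift id = id"
  by (auto simp: lift_def fun_eq_iff)

lemma lift_tr: "lift (Transposition.transpose a b \<circ> \<rho>) = Transposition.transpose (Suc a) (Suc b) \<circ> lift \<rho>"
  by (auto simp: lift_def fun_eq_iff Transposition.transpose_def)

lemma lift_perm:
  assumes "\<rho> permutes {..<m}"
  shows "lift \<rho> permutes {..<Suc m} \<and> sign (lift \<rho>) = sign \<rho>"
  using assms finite_lessThan
proof (induction rule: permutes_induct)
  case id
  show ?case unfolding lift_id using permutes_id[of "{..<Suc m}"] by (simp add: id_def)
next
  case (swap a b p)
  have pp: "permutation (lift p)" by (rule permutes_imp_permutation[OF _ conjunct1[OF swap.IH]]) simp
  have p2: "permutation p" by (rule permutes_imp_permutation[OF _ swap.hyps(4)]) simp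
  have "lift (Transposition.transpose a b \<circ> p) permutes {..<Suc m}"
    unfolding lift_tr using swap by (intro permutes_compose permutes_swap_id) auto
  moreover have "sign (lift (Transposition.transpose a b \<circ> p)) = sign (Transposition.transpose a b \<circ> p)"
    unfolding lift_tr sign_compose[OF permutation_swap_id pp] sign_compose[OF permutation_swap_id p2]
    using swap by (simp add: sign_swap_id)
  ultimately show ?case by blast
qed

lemma unlift_perm:
  assumes b: "b permutes {..<Suc m}" "b 0 = 0"
  shows "unlift b permutes {..<m}"
proof (rule bij_imp_permutes)
  have nz: "b (Suc i) \<noteq> 0" for i
  proof
    assume "b (Suc i) = 0"
    then have "b (Suc i) = b 0" using b(2) by simp
    then show False using permutes_inj[OF b(1)] by (simp add: inj_eq)
  qed
  have inj: "inj_on (unlift b) {..<m}"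
  proof
    fix x y assume "x \<in> {..<m}" "y \<in> {..<m}" "unlift b x = unlift b y"
    then have "b (Suc x) = b (Suc y)" using nz[of x] nz[of y] by (simp add: unlift_def)
    then show "x = y" using permutes_inj[OF b(1)] by (simp add: inj_eq)
  qed
  have sub: "unlift b ` {..<m} \<subseteq> {..<m}"
  proof
    fix y assume "y \<in> unlift b ` {..<m}"
    then obtain x where "x < m" "y = unlift b x" by auto
    then show "y \<in> {..<m}" using permutes_in_image[OF b(1), of "Suc x"] by (simp add: unlift_def)
  qed
  show "bij_betw (unlift b) {..<m} {..<m}"
    by (rule bij_betw_imageI[OF inj endo_inj_surj[OF _ sub inj]]) simp
next
  fix x assume "x \<notin> {..<m}"
  then show "unlift b x = x" using permutes_not_in[OF b(1), of "Suc x"] by (simp add: unlift_def)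
qed

lemma sum_lift:
  "(\<Sum>\<sigma>\<in>{\<sigma>\<in>PS (Suc m). \<sigma> 0 = 0}. f \<sigma>) = (\<Sum>\<rho>\<in>PS m. f (lift \<rho>))"
proof (rule sum.reindex_bij_witness[symmetric, where i=unlift and j=lift])
  fix a assume a: "a \<in> PS m"
  show "unlift (lift a) = a" by (simp add: lift_def unlift_def)
  show "lift a \<in> {\<sigma>\<in>PS (Suc m). \<sigma> 0 = 0}" using lift_perm[of a m] a by (simp add: lift_def)
next
  fix b assume b: "b \<in> {\<sigma>\<in>PS (Suc m). \<sigma> 0 = 0}"
  have bp: "b permutes {..<Suc m}" and b0: "b 0 = 0" using b by auto
  have nz: "b i \<noteq> 0" if "i \<noteq> 0" for i
  proof
    assume "b i = 0"
    then have "b i = b 0" using b0 by simp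
    then show False using permutes_inj[OF bp] that by (simp add: inj_eq)
  qed
  show "lift (unlift b) = b"
  proof
    fix i show "lift (unlift b) i = b i"
    proof (cases "i = 0")
      case True then show ?thesis using b0 by (simp add: lift_def)
    next
      case False
      then have "Suc (i - 1) = i" by simp
      then show ?thesis using False nz[OF False] by (simp add: lift_def unlift_def)
    qed
  qed
  show "unlift b \<in> PS m" using unlift_perm b by auto
qed simp

definition cyc :: "nat \<Rightarrow> nat \<Rightarrow> nat" where
  "cyc p = (\<lambda>i. if i < p then Suc i else if i = p then 0 else i)"

lemma cyc_0: "cyc 0 = id" by (auto simp: cyc_def fun_eq_iff)

lemma cyc_Suc: "cyc (Suc p) = cyc p \<circ> Transposition.transpose p (Suc p)"
  by (auto simp: cyc_def fun_eq_iff Transposition.transpose_def)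

lemma cyc_permutes: "p < n \<Longrightarrow> cyc p permutes {..<n}"
proof (induction p)
  case 0 then show ?case unfolding cyc_0 using permutes_id[of "{..<n}"] by (simp add: id_def)
next
  case (Suc p)
  then have c: "cyc p permutes {..<n}" by simp
  have t: "Transposition.transpose p (Suc p) permutes {..<n}" using Suc by (intro permutes_swap_id) auto
  show ?case unfolding cyc_Suc by (rule permutes_compose[OF t c])
qed

lemma cyc_sign: "sign (cyc p) = (-1) ^ p"
proof (induction p)
  case 0 then show ?case by (simp add: cyc_0)
next
  case (Suc p)
  have pc: "permutation (cyc p)" by (rule permutes_imp_permutation[OF _ cyc_permutes[of p "Suc p"]]) simp_all
  show ?case unfolding cyc_Suc sign_compose[OF pc permutation_swap_id] using Suc
    by (simp add: sign_swap_id)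
qed

lemma wt_lift:
  assumes "0 < p" "\<rho> permutes {..<m}"
  shows "wt p \<alpha> \<beta> v (lift \<rho>) = wt (p - 1) (contract (v 0) \<alpha>) \<beta> (\<lambda>i. v (Suc i)) \<rho>"
proof -
  have s: "sign (lift \<rho>) = sign \<rho>" using lift_perm[OF assms(2)] by simp
  have a: "(\<lambda>i. v (lift \<rho> i)) = (\<lambda>i. if i = 0 then v 0 else v (Suc (\<rho> (i - 1))))"
    by (auto simp: lift_def fun_eq_iff)
  have b: "(\<lambda>i. v (lift \<rho> (i + p))) = (\<lambda>i. v (Suc (\<rho> (i + (p - 1)))))"
    using assms(1) by (auto simp: lift_def fun_eq_iff)
  show ?thesis unfolding wt_def contract_def s a b by simp
qed

lemma wt_liftc:
  assumes "is_pform p \<alpha>" "\<rho> permutes {..<m}"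
  shows "wt p \<alpha> \<beta> v (lift \<rho> \<circ> cyc p) = (-1) ^ p * wt p \<alpha> (contract (v 0) \<beta>) (\<lambda>i. v (Suc i)) \<rho>"
proof -
  have pl: "permutation (lift \<rho>)"
    by (rule permutes_imp_permutation[OF _ conjunct1[OF lift_perm[OF assms(2)]]]) simp
  have pc: "permutation (cyc p)" by (rule permutes_imp_permutation[OF _ cyc_permutes[of p "Suc p"]]) simp_all
  have s: "sign (lift \<rho> \<circ> cyc p) = sign \<rho> * (-1) ^ p"
    unfolding sign_compose[OF pl pc] cyc_sign using lift_perm[OF assms(2)] by simp
  have a: "\<alpha> (\<lambda>i. v ((lift \<rho> \<circ> cyc p) i)) = \<alpha> (\<lambda>i. v (Suc (\<rho> i)))"
    by (rule pform_dep[OF assms(1)]) (simp add: lift_def cyc_def)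
  have b: "(\<lambda>i. v ((lift \<rho> \<circ> cyc p) (i + p))) = (\<lambda>i. if i = 0 then v 0 else v (Suc (\<rho> (i - 1 + p))))"
  proof
    fix i show "v ((lift \<rho> \<circ> cyc p) (i + p)) = (if i = 0 then v 0 else v (Suc (\<rho> (i - 1 + p))))"
      by (cases i) (auto simp: lift_def cyc_def)
  qed
  show ?thesis unfolding wt_def contract_def s a b by simp
qed

lemma wedge_00: "wedge 0 0 \<alpha> \<beta> v = \<alpha> v * \<beta> v"
proof -
  have "PS (0 + 0) = {id}" by auto
  then show ?thesis unfolding wedge_wt wt_def by (simp add: id_def)
qed

lemma wedge_rec:
  assumes \<alpha>: "is_pform p \<alpha>" and \<beta>: "is_pform q \<beta>" and n: "0 < p + q"
  shows "wedge p q \<alpha> \<beta> v =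
     (if p = 0 then 0 else wedge (p - 1) q (contract (v 0) \<alpha>) \<beta> (\<lambda>i. v (Suc i))) +
     (if q = 0 then 0 else (-1) ^ p * wedge p (q - 1) \<alpha> (contract (v 0) \<beta>) (\<lambda>i. v (Suc i)))"
proof -
  obtain m where nm: "p + q = Suc m" using n by (metis Suc_pred')
  define G where "G k = (\<Sum>\<sigma>\<in>{\<sigma>\<in>PS (p+q). \<sigma> k = 0}. wt p \<alpha> \<beta> v \<sigma>)" for k
  have S: "(\<Sum>\<sigma>\<in>PS (p+q). wt p \<alpha> \<beta> v \<sigma>) = (\<Sum>k<p+q. G k)"
    unfolding G_def by (rule sum_fiber[OF n])
  have GA: "G k = G 0" if "k < p" for k
  proof -
    have "G k = (\<Sum>\<sigma>\<in>{\<sigma>\<in>PS (p+q). \<sigma> 0 = 0}. wt p \<alpha> \<beta> v (\<sigma> \<circ> Transposition.transpose 0 k))"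
      unfolding G_def by (rule fiber_move) (use that in auto)
    also have "\<dots> = G 0" unfolding G_def
      by (rule sum.cong[OF refl], rule wt_swap_a[OF \<alpha>]) (use that in auto)
    finally show ?thesis .
  qed
  have GB: "G k = G p" if "p \<le> k" "k < p + q" for k
  proof -
    have "G k = (\<Sum>\<sigma>\<in>{\<sigma>\<in>PS (p+q). \<sigma> p = 0}. wt p \<alpha> \<beta> v (\<sigma> \<circ> Transposition.transpose p k))"
      unfolding G_def by (rule fiber_move) (use that in auto)
    also have "\<dots> = G p" unfolding G_def
      by (rule sum.cong[OF refl], rule wt_swap_b[OF \<alpha> \<beta>]) (use that in auto)
    finally show ?thesis .
  qed
  have split: "(\<Sum>k<p+q. G k) = real p * G 0 + real q * G p"
  proof -
    have u: "{..<p+q} = {..<p} \<union> {p..<p+q}" by auto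
    have "(\<Sum>k<p+q. G k) = (\<Sum>k<p. G k) + (\<Sum>k\<in>{p..<p+q}. G k)"
      unfolding u by (rule sum.union_disjoint) auto
    also have "(\<Sum>k<p. G k) = (\<Sum>k<p. G 0)" by (rule sum.cong[OF refl], rule GA) simp
    also have "(\<Sum>k\<in>{p..<p+q}. G k) = (\<Sum>k\<in>{p..<p+q}. G p)" by (rule sum.cong[OF refl], rule GB) auto
    finally show ?thesis by simp
  qed
  have G0: "G 0 = fact (p - 1) * fact q * wedge (p - 1) q (contract (v 0) \<alpha>) \<beta> (\<lambda>i. v (Suc i))" if "0 < p"
  proof -
    have "G 0 = (\<Sum>\<rho>\<in>PS m. wt p \<alpha> \<beta> v (lift \<rho>))" unfolding G_def nm by (rule sum_lift)
    also have "\<dots> = (\<Sum>\<rho>\<in>PS m. wt (p - 1) (contract (v 0) \<alpha>) \<beta> (\<lambda>i. v (Suc i)) \<rho>)"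
      by (rule sum.cong[OF refl]) (simp add: wt_lift[OF that])
    also have "\<dots> = fact (p - 1) * fact q * wedge (p - 1) q (contract (v 0) \<alpha>) \<beta> (\<lambda>i. v (Suc i))"
    proof -
      have "p - 1 + q = m" using nm that by simp
      then show ?thesis unfolding wedge_wt by simp
    qed
    finally show ?thesis .
  qed
  have Gp: "G p = (-1) ^ p * (fact p * fact (q - 1) * wedge p (q - 1) \<alpha> (contract (v 0) \<beta>) (\<lambda>i. v (Suc i)))" if "0 < q"
  proof -
    have cp: "cyc p permutes {..<p+q}" using that by (intro cyc_permutes) simp
    have c0: "cyc p p = 0" by (simp add: cyc_def)
    have ic: "inv (cyc p) 0 = p" using permutes_inv_eq[OF cp] c0 by simp
    have "G p = (\<Sum>\<sigma>\<in>{\<sigma>\<in>PS (p+q). \<sigma> 0 = 0}. wt p \<alpha> \<beta> v (\<sigma> \<circ> cyc p))"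
      unfolding G_def
    proof (rule sum.reindex_bij_witness[symmetric, where i="\<lambda>\<sigma>. \<sigma> \<circ> inv (cyc p)" and j="\<lambda>\<sigma>. \<sigma> \<circ> cyc p"])
      fix a assume a: "a \<in> {\<sigma>\<in>PS (p+q). \<sigma> 0 = 0}"
      show "a \<circ> cyc p \<circ> inv (cyc p) = a" by (simp add: o_assoc[symmetric] permutes_inv_o[OF cp])
      show "a \<circ> cyc p \<in> {\<sigma>\<in>PS (p+q). \<sigma> p = 0}" using a c0 permutes_compose[OF cp, of a] by auto
    next
      fix b assume b: "b \<in> {\<sigma>\<in>PS (p+q). \<sigma> p = 0}"
      show "b \<circ> inv (cyc p) \<circ> cyc p = b" by (simp add: o_assoc[symmetric] permutes_inv_o[OF cp])
      show "b \<circ> inv (cyc p) \<in> {\<sigma>\<in>PS (p+q). \<sigma> 0 = 0}" using b ic permutes_compose[OF permutes_inv[OF cp], of b] by auto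
    qed simp
    also have "\<dots> = (\<Sum>\<rho>\<in>PS m. wt p \<alpha> \<beta> v (lift \<rho> \<circ> cyc p))" unfolding nm by (rule sum_lift)
    also have "\<dots> = (\<Sum>\<rho>\<in>PS m. (-1) ^ p * wt p \<alpha> (contract (v 0) \<beta>) (\<lambda>i. v (Suc i)) \<rho>)"
      by (rule sum.cong[OF refl]) (simp add: wt_liftc[OF \<alpha>])
    also have "\<dots> = (-1) ^ p * (\<Sum>\<rho>\<in>PS m. wt p \<alpha> (contract (v 0) \<beta>) (\<lambda>i. v (Suc i)) \<rho>)"
      by (simp add: sum_distrib_left)
    also have "(\<Sum>\<rho>\<in>PS m. wt p \<alpha> (contract (v 0) \<beta>) (\<lambda>i. v (Suc i)) \<rho>) = fact p * fact (q - 1) * wedge p (q - 1) \<alpha> (contract (v 0) \<beta>) (\<lambda>i. v (Suc i))"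
    proof -
      have "p + (q - 1) = m" using nm that by simp
      then show ?thesis unfolding wedge_wt by simp
    qed
    finally show ?thesis .
  qed
  have W: "wedge p q \<alpha> \<beta> v = (real p * G 0 + real q * G p) / (fact p * fact q)"
    unfolding wedge_wt S split ..
  have T1: "real p * G 0 / (fact p * fact q) = (if p = 0 then 0 else wedge (p - 1) q (contract (v 0) \<alpha>) \<beta> (\<lambda>i. v (Suc i)))"
  proof (cases "p = 0")
    case False
    have f: "(fact p :: real) = real p * fact (p - 1)" using False by (simp add: fact_reduce)
    have nz: "(fact (p - 1) :: real) \<noteq> 0" "(fact q :: real) \<noteq> 0" "real p \<noteq> 0" using False by auto
    show ?thesis unfolding f using False nz by (simp add: G0)
  qed simp
  have T2: "real q * G p / (fact p * fact q) = (if q = 0 then 0 else (-1) ^ p * wedge p (q - 1) \<alpha> (contract (v 0) \<beta>) (\<lambda>i. v (Suc i)))"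
  proof (cases "q = 0")
    case False
    have f: "(fact q :: real) = real q * fact (q - 1)" using False by (simp add: fact_reduce)
    have nz: "(fact (q - 1) :: real) \<noteq> 0" "(fact p :: real) \<noteq> 0" "real q \<noteq> 0" using False by auto
    show ?thesis unfolding f using False nz by (simp add: Gp)
  qed simp
  show ?thesis unfolding W add_divide_distrib T1 T2 ..
qed

lemma linear_cmul_real: "linear (g :: 'a::real_vector \<Rightarrow> real) \<Longrightarrow> linear (\<lambda>x. c * g x)"
  unfolding linear_iff by (simp add: algebra_simps)

lemma one_form_pform: "linear \<theta> \<Longrightarrow> is_pform 1 (one_form \<theta>)"
  unfolding is_pform_def one_form_def by auto

lemma wedge_pform:
  assumes \<alpha>: "is_pform p \<alpha>" and \<beta>: "is_pform q \<beta>"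
  shows "is_pform (p + q) (wedge p q \<alpha> \<beta>)"
  unfolding is_pform_def
proof (intro conjI allI impI)
  fix v w :: "nat \<Rightarrow> 'a" assume h: "\<forall>i<p + q. v i = w i"
  show "wedge p q \<alpha> \<beta> v = wedge p q \<alpha> \<beta> w"
    unfolding wedge_wt
  proof (rule arg_cong[where f="\<lambda>x. x / _"], rule sum.cong[OF refl])
    fix \<sigma> assume s: "\<sigma> \<in> PS (p+q)"
    then have s': "\<sigma> permutes {..<p+q}" by simp
    have a: "\<alpha> (\<lambda>i. v (\<sigma> i)) = \<alpha> (\<lambda>i. w (\<sigma> i))"
      by (rule pform_dep[OF \<alpha>]) (use h permutes_in_image[OF s'] in auto)
    have b: "\<beta> (\<lambda>i. v (\<sigma> (i + p))) = \<beta> (\<lambda>i. w (\<sigma> (i + p)))"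
      by (rule pform_dep[OF \<beta>]) (use h permutes_in_image[OF s'] in auto)
    show "wt p \<alpha> \<beta> v \<sigma> = wt p \<alpha> \<beta> w \<sigma>" unfolding wt_def a b ..
  qed
next
  fix i and v :: "nat \<Rightarrow> 'a" assume i: "i < p + q"
  have e: "(\<lambda>x. wedge p q \<alpha> \<beta> (v(i := x))) = (\<lambda>x. \<Sum>\<sigma>\<in>PS (p+q). (1 / (fact p * fact q)) * wt p \<alpha> \<beta> (v(i := x)) \<sigma>)"
    unfolding wedge_wt by (simp add: sum_divide_distrib)
  show "linear (\<lambda>x. wedge p q \<alpha> \<beta> (v(i := x)))"
    unfolding e
  proof (rule linear_compose_sum, intro ballI)
    fix \<sigma> assume "\<sigma> \<in> PS (p+q)"
    then have s: "\<sigma> permutes {..<p+q}" by simp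
    define k where "k = inv \<sigma> i"
    have k: "k < p + q" using permutes_in_image[OF permutes_inv[OF s], of i] i by (simp add: k_def)
    have sk: "\<sigma> j = i \<longleftrightarrow> j = k" for j using permutes_inv_eq[OF s, of i j] by (auto simp: k_def)
    show "linear (\<lambda>x. 1 / (fact p * fact q) * wt p \<alpha> \<beta> (v(i := x)) \<sigma>)"
    proof (cases "k < p")
      case True
      have a: "(\<lambda>j. (v(i := x)) (\<sigma> j)) = (\<lambda>j. v (\<sigma> j))(k := x)" for x
        by (auto simp: fun_eq_iff sk)
      have b: "(\<lambda>j. (v(i := x)) (\<sigma> (j + p))) = (\<lambda>j. v (\<sigma> (j + p)))" for x
        using True by (auto simp: fun_eq_iff sk)
      have "linear (\<lambda>x. (1 / (fact p * fact q) * real_of_int (sign \<sigma>) * \<beta> (\<lambda>j. v (\<sigma> (j + p)))) * \<alpha> ((\<lambda>j. v (\<sigma> j))(k := x)))"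
        by (rule linear_cmul_real, rule pform_lin[OF \<alpha> True])
      then show ?thesis unfolding wt_def a b by (simp add: ac_simps)
    next
      case False
      have a: "\<alpha> (\<lambda>j. (v(i := x)) (\<sigma> j)) = \<alpha> (\<lambda>j. v (\<sigma> j))" for x
        by (rule pform_dep[OF \<alpha>]) (use False sk in auto)
      have b: "(\<lambda>j. (v(i := x)) (\<sigma> (j + p))) = (\<lambda>j. v (\<sigma> (j + p)))(k - p := x)" for x
        using False by (auto simp: fun_eq_iff sk)
      have "linear (\<lambda>x. (1 / (fact p * fact q) * real_of_int (sign \<sigma>) * \<alpha> (\<lambda>j. v (\<sigma> j))) * \<beta> ((\<lambda>j. v (\<sigma> (j + p)))(k - p := x)))"
        by (rule linear_cmul_real, rule pform_lin[OF \<beta>]) (use False k in auto)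
      then show ?thesis unfolding wt_def a b by (simp add: ac_simps)
    qed
  qed
next
  fix v :: "nat \<Rightarrow> 'a" and i j assume h: "i < p + q" "j < p + q" "i \<noteq> j" "v i = v j"
  let ?t = "Transposition.transpose i j"
  have t: "?t permutes {..<p+q}" using h by (intro permutes_swap_id) auto
  have vt: "v (?t x) = v x" for x using h by (auto simp: Transposition.transpose_def)
  have "(\<Sum>\<sigma>\<in>PS (p+q). wt p \<alpha> \<beta> v \<sigma>) = (\<Sum>\<sigma>\<in>PS (p+q). wt p \<alpha> \<beta> v (?t \<circ> \<sigma>))"
  proof (rule sum.reindex_bij_witness[where i="\<lambda>\<sigma>. ?t \<circ> \<sigma>" and j="\<lambda>\<sigma>. ?t \<circ> \<sigma>"])
  qed (auto simp: o_assoc intro: permutes_compose[OF _ t])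
  also have "\<dots> = (\<Sum>\<sigma>\<in>PS (p+q). - wt p \<alpha> \<beta> v \<sigma>)"
  proof (rule sum.cong[OF refl])
    fix \<sigma> assume "\<sigma> \<in> PS (p+q)"
    then have s: "\<sigma> permutes {..<p+q}" by simp
    have ps: "permutation \<sigma>" by (rule permutes_imp_permutation[OF _ s]) simp
    have sg: "sign (?t \<circ> \<sigma>) = - sign \<sigma>"
      unfolding sign_compose[OF permutation_swap_id ps] using h by (simp add: sign_swap_id)
    show "wt p \<alpha> \<beta> v (?t \<circ> \<sigma>) = - wt p \<alpha> \<beta> v \<sigma>"
      unfolding wt_def sg by (simp add: vt)
  qed
  also have "\<dots> = - (\<Sum>\<sigma>\<in>PS (p+q). wt p \<alpha> \<beta> v \<sigma>)" by (simp add: sum_negf)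
  finally have "(\<Sum>\<sigma>\<in>PS (p+q). wt p \<alpha> \<beta> v \<sigma>) = 0" by simp
  then show "wedge p q \<alpha> \<beta> v = 0" unfolding wedge_wt by simp
qed

definition F4 :: "((nat \<Rightarrow> 'a) \<Rightarrow> real) \<Rightarrow> 'a \<Rightarrow> 'a \<Rightarrow> 'a \<Rightarrow> 'a \<Rightarrow> real" where
  "F4 F a b c d = F (\<lambda>i. if i = 0 then a else if i = 1 then b else if i = 2 then c else d)"

lemma F_app4: "is_pform 4 F \<Longrightarrow> F u = F4 F (u 0) (u 1) (u 2) (u 3)"
  unfolding F4_def by (erule pform_dep) (auto simp: numeral_eq_Suc less_Suc_eq)

lemma cp3: "is_pform 4 F \<Longrightarrow> is_pform 3 (contract X F)"
  by (rule contract_pform) (simp add: numeral_eq_Suc)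
lemma cp2: "is_pform 3 F \<Longrightarrow> is_pform 2 (contract X F)"
  by (rule contract_pform) (simp add: numeral_eq_Suc)
lemma cp1: "is_pform 2 F \<Longrightarrow> is_pform 1 (contract X F)"
  by (rule contract_pform) (simp add: numeral_eq_Suc)
lemma cp0: "is_pform 1 F \<Longrightarrow> is_pform 0 (contract X F)"
  by (rule contract_pform) (simp add: numeral_eq_Suc)

lemma cp1': "is_pform 2 F \<Longrightarrow> is_pform (Suc 0) (contract X F)"
  by (rule contract_pform) (simp add: numeral_eq_Suc)
lemma cp0': "is_pform (Suc 0) F \<Longrightarrow> is_pform 0 (contract X F)"
  by (rule contract_pform) (simp add: numeral_eq_Suc)

lemmas wsimps = cp1' cp0'  wedge_rec wedge_00 cp3 cp2 cp1 cp0 wedge_pform one_form_pform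

lemma F4_s01: "is_pform 4 F \<Longrightarrow> F4 F a b c d = - F4 F b a c d"
proof -
  assume F: "is_pform 4 F"
  let ?V = "\<lambda>i. if i = 0 then a else if i = 1 then b else if i = 2 then c else d"
  have "F (\<lambda>i. if i = 0 then b else if i = 1 then a else if i = 2 then c else d) = F (\<lambda>k. ?V (Transposition.transpose (0::nat) 1 k))"
    by (rule pform_dep[OF F]) (auto simp: Transposition.transpose_def numeral_eq_Suc less_Suc_eq)
  then show ?thesis unfolding F4_def using pform_swap[OF F, of "0::nat" 1 ?V] by simp
qed

lemma F4_s12: "is_pform 4 F \<Longrightarrow> F4 F a b c d = - F4 F a c b d"
proof -
  assume F: "is_pform 4 F"
  let ?V = "\<lambda>i. if i = 0 then a else if i = 1 then b else if i = 2 then c else d"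
  have "F (\<lambda>i. if i = 0 then a else if i = 1 then c else if i = 2 then b else d) = F (\<lambda>k. ?V (Transposition.transpose (1::nat) 2 k))"
    by (rule pform_dep[OF F]) (auto simp: Transposition.transpose_def numeral_eq_Suc less_Suc_eq)
  then show ?thesis unfolding F4_def using pform_swap[OF F, of "1::nat" 2 ?V] by simp
qed

lemma F4_s23: "is_pform 4 F \<Longrightarrow> F4 F a b c d = - F4 F a b d c"
proof -
  assume F: "is_pform 4 F"
  let ?V = "\<lambda>i. if i = 0 then a else if i = 1 then b else if i = 2 then c else d"
  have "F (\<lambda>i. if i = 0 then a else if i = 1 then b else if i = 2 then d else c) = F (\<lambda>k. ?V (Transposition.transpose (2::nat) 3 k))"
    by (rule pform_dep[OF F]) (auto simp: Transposition.transpose_def numeral_eq_Suc less_Suc_eq)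
  then show ?thesis unfolding F4_def using pform_swap[OF F, of "2::nat" 3 ?V] by simp
qed

lemma F4_r03: "is_pform 4 F \<Longrightarrow> F4 F a b c a = 0"
  unfolding F4_def by (erule pform_alt[of 4 F 0 3]) auto

lemma F4_r01: "is_pform 4 F \<Longrightarrow> F4 F a a c d = 0"
  unfolding F4_def by (erule pform_alt[of 4 F 0 1]) auto

lemma F4_r13: "is_pform 4 F \<Longrightarrow> F4 F a b c b = 0"
  unfolding F4_def by (erule pform_alt[of 4 F 1 3]) auto

lemma plucker:
  assumes F: "is_pform 4 F"
    and P: "\<forall>X Y Z. wedge 1 4 (contract Z (contract Y (contract X F))) F = (\<lambda>_. 0)"
  shows "F4 F X Y Z a0 * F4 F a1 a2 a3 a4 - F4 F X Y Z a1 * F4 F a0 a2 a3 a4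
       + F4 F X Y Z a2 * F4 F a0 a1 a3 a4 - F4 F X Y Z a3 * F4 F a0 a1 a2 a4
       + F4 F X Y Z a4 * F4 F a0 a1 a2 a3 = 0"
proof -
  let ?u = "\<lambda>i. if i = 0 then a0 else if i = 1 then a1 else if i = 2 then a2 else if i = 3 then a3 else a4"
  have "wedge 1 4 (contract Z (contract Y (contract X F))) F ?u = 0" using P by metis
  then show ?thesis using F by (simp add: wsimps, simp add: contract_def F_app4[OF F] algebra_simps)
qed

lemma comm32:
  assumes F: "is_pform 4 F"
  shows "wedge 3 2 (contract X F) (contract Y (contract Z F)) u = wedge 2 3 (contract Y (contract Z F)) (contract X F) u"
  using F by (simp add: wsimps)


lemma LH:
  assumes F: "is_pform 4 F"
    and P: "\<forall>X Y Z. wedge 1 4 (contract Z (contract Y (contract X F))) F = (\<lambda>_. 0)"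
  shows "F4 F a b c d * F4 F a b y z = F4 F a b y d * F4 F a b c z - F4 F a b z d * F4 F a b c y"
proof -
  note Pl = plucker[OF F P, of a b d c a b y z]
  have e1: "F4 F a b d c = - F4 F a b c d" by (rule F4_s23[OF F])
  have e2: "F4 F a b d a = 0" by (rule F4_r03[OF F])
  have e3: "F4 F a b d b = 0" by (rule F4_r13[OF F])
  have e4: "F4 F a b d y = - F4 F a b y d" by (rule F4_s23[OF F])
  have e5: "F4 F a b d z = - F4 F a b z d" by (rule F4_s23[OF F])
  have e6: "F4 F c a b z = F4 F a b c z" using F4_s01[OF F, of c a b z] F4_s12[OF F, of a c b z] by simp
  have e7: "F4 F c a b y = F4 F a b c y" using F4_s01[OF F, of c a b y] F4_s12[OF F, of a c b y] by simp
  show ?thesis using Pl unfolding e1 e2 e3 e4 e5 e6 e7 by (simp add: algebra_simps)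
qed

lemma LG:
  assumes F: "is_pform 4 F"
    and P: "\<forall>X Y Z. wedge 1 4 (contract Z (contract Y (contract X F))) F = (\<lambda>_. 0)"
  shows "F4 F a b c d * F4 F a y1 y2 y3 = F4 F a y1 c d * F4 F a b y2 y3 - F4 F a y2 c d * F4 F a b y1 y3 + F4 F a y3 c d * F4 F a b y1 y2"
proof -
  note Pl = plucker[OF F P, of a c d b a y1 y2 y3]
  have e1: "F4 F a c d b = F4 F a b c d" using F4_s23[OF F, of a c d b] F4_s12[OF F, of a c b d] by simp
  have e2: "F4 F a c d a = 0" by (rule F4_r03[OF F])
  have e2': "F4 F a a c d = 0" by (rule F4_r01[OF F])
  have e3: "F4 F a c d y = F4 F a y c d" for y using F4_s23[OF F, of a c d y] F4_s12[OF F, of a c y d] by simp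
  have e4: "F4 F b a y z = - F4 F a b y z" for y z by (rule F4_s01[OF F])
  show ?thesis using Pl unfolding e1 e2 e3 e4 e2' by (simp add: algebra_simps)
qed

lemma LF:
  assumes F: "is_pform 4 F"
    and P: "\<forall>X Y Z. wedge 1 4 (contract Z (contract Y (contract X F))) F = (\<lambda>_. 0)"
  shows "F4 F a b c d * F4 F x0 x1 x2 x3 = F4 F x0 b c d * F4 F a x1 x2 x3 - F4 F x1 b c d * F4 F a x0 x2 x3
           + F4 F x2 b c d * F4 F a x0 x1 x3 - F4 F x3 b c d * F4 F a x0 x1 x2"
proof -
  note Pl = plucker[OF F P, of b c d a x0 x1 x2 x3]
  have e1: "F4 F b c d x = - F4 F x b c d" for x
    using F4_s23[OF F, of b c d x] F4_s12[OF F, of b c x d] F4_s01[OF F, of b x c d] by simp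
  show ?thesis using Pl unfolding e1 by (simp add: algebra_simps)
qed

lemma contract_app: "contract X G w = G (\<lambda>i. if i = 0 then X else w (i - 1))"
  by (simp add: contract_def)

lemma one_form_app: "one_form \<theta> w = \<theta> (w 0)"
  by (simp add: one_form_def)

lemma one_form_pform': "linear \<theta> \<Longrightarrow> is_pform (Suc 0) (one_form \<theta>)"
  using one_form_pform by simp

lemma wedge_uminus_left: "wedge p q (\<lambda>w. - \<alpha> w) \<beta> v = - wedge p q \<alpha> \<beta> v"
  unfolding wedge_def by (simp add: sum_negf)

lemma contract_swap:
  assumes F: "is_pform 4 F"
  shows "contract Y (contract X F) = (\<lambda>w. - contract X (contract Y F) w)"
proof
  fix w
  let ?V = "\<lambda>i::nat. if i = 0 then Y else if i - 1 = 0 then X else w (i - 1 - 1)"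
  have "(\<lambda>i. if i = 0 then X else if i - 1 = 0 then Y else w (i - 1 - 1)) = (\<lambda>k. ?V (Transposition.transpose (0::nat) 1 k))"
    by (auto simp: fun_eq_iff Transposition.transpose_def)
  then show "contract Y (contract X F) w = - contract X (contract Y F) w"
    unfolding contract_def using pform_swap[OF F, of "0::nat" 1 ?V] by simp
qed

lemma F_app4': "is_pform 4 F \<Longrightarrow> F u = F4 F (u 0) (u (Suc 0)) (u (Suc (Suc 0))) (u (Suc (Suc (Suc 0))))"
  using F_app4[of F u] by (simp add: numeral_eq_Suc)

lemma F4_lin0: "is_pform 4 F \<Longrightarrow> linear (\<lambda>x. F4 F x b c d)"
proof -
  assume F: "is_pform 4 F"
  let ?V = "\<lambda>i::nat. if i = 0 then b else if i = 1 then b else if i = 2 then c else d"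
  have "(\<lambda>x. F4 F x b c d) = (\<lambda>x. F (?V(0 := x)))"
    unfolding F4_def by (intro ext pform_dep[OF F]) auto
  then show ?thesis using pform_lin[OF F, of 0 ?V] by simp
qed

lemma F4_lin1: "is_pform 4 F \<Longrightarrow> linear (\<lambda>x. F4 F a x c d)"
proof -
  assume F: "is_pform 4 F"
  let ?V = "\<lambda>i::nat. if i = 0 then a else if i = 1 then a else if i = 2 then c else d"
  have "(\<lambda>x. F4 F a x c d) = (\<lambda>x. F (?V(1 := x)))"
    unfolding F4_def by (intro ext pform_dep[OF F]) auto
  then show ?thesis using pform_lin[OF F, of 1 ?V] by simp
qed

lemma F4_lin2: "is_pform 4 F \<Longrightarrow> linear (\<lambda>x. F4 F a b x d)"
proof -
  assume F: "is_pform 4 F"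
  let ?V = "\<lambda>i::nat. if i = 0 then a else if i = 1 then b else if i = 2 then a else d"
  have "(\<lambda>x. F4 F a b x d) = (\<lambda>x. F (?V(2 := x)))"
    unfolding F4_def by (intro ext pform_dep[OF F]) auto
  then show ?thesis using pform_lin[OF F, of 2 ?V] by simp
qed

lemma F4_lin3: "is_pform 4 F \<Longrightarrow> linear (\<lambda>x. F4 F a b c x)"
proof -
  assume F: "is_pform 4 F"
  let ?V = "\<lambda>i::nat. if i = 0 then a else if i = 1 then b else if i = 2 then c else a"
  have "(\<lambda>x. F4 F a b c x) = (\<lambda>x. F (?V(3 := x)))"
    unfolding F4_def by (intro ext pform_dep[OF F]) (auto simp: numeral_eq_Suc less_Suc_eq)
  then show ?thesis using pform_lin[OF F, of 3 ?V] by simp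
qed

theorem mainTheorem6:
  fixes F :: "(nat \<Rightarrow> 'a::euclidean_space) \<Rightarrow> real"
  assumes "is_pform 4 F"
    and "\<forall>X. wedge 3 4 (contract X F) F = (\<lambda>_. 0)"
    and "\<forall>X Y. wedge 3 3 (contract X F) (contract Y F) = (\<lambda>_. 0)"
  shows "(\<forall>X Y Z. wedge 1 4 (contract Z (contract Y (contract X F))) F = (\<lambda>_. 0)) \<and>
         (\<exists>\<theta>1 \<theta>2 \<theta>3 \<theta>4. linear \<theta>1 \<and> linear \<theta>2 \<and> linear \<theta>3 \<and> linear \<theta>4 \<and>
            F = wedge 3 1 (wedge 2 1 (wedge 1 1 (one_form \<theta>1) (one_form \<theta>2)) (one_form \<theta>3))
                  (one_form \<theta>4))"
proof -
  note F = assms(1)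
  have H2: "wedge 3 4 (contract X F) F v = 0" for X v using assms(2) by metis
  have H3: "wedge 3 3 (contract X F) (contract Y F) v = 0" for X Y v using assms(3) by metis
  have B: "wedge 2 4 (contract Y (contract X F)) F w = 0" for X Y w
  proof -
    let ?v = "\<lambda>i. if i = 0 then Y else w (i - 1)"
    have e: "(\<lambda>i. ?v (Suc i)) = w" by simp
    have "wedge 3 4 (contract X F) F ?v = wedge 2 4 (contract Y (contract X F)) F w - wedge 3 3 (contract X F) (contract Y F) w"
      using wedge_rec[OF cp3[OF F] F, where v="?v"] by (simp add: e)
    then show ?thesis using H2[of X ?v] H3[of X Y w] by simp
  qed
  define A where "A X Y Z u = wedge 2 3 (contract Y (contract X F)) (contract Z F) u" for X Y Z u
  have C: "wedge 1 4 (contract Z (contract Y (contract X F))) F u + A X Y Z u = 0" for X Y Z u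
  proof -
    let ?v = "\<lambda>i. if i = 0 then Z else u (i - 1)"
    have e: "(\<lambda>i. ?v (Suc i)) = u" by simp
    have "wedge 2 4 (contract Y (contract X F)) F ?v = wedge 1 4 (contract Z (contract Y (contract X F))) F u + A X Y Z u"
      using wedge_rec[OF cp2[OF cp3[OF F]] F, where v="?v"] by (simp add: e A_def)
    then show ?thesis using B[of Y X ?v] by simp
  qed
  have S: "A X Y Z u = A Z Y X u" for X Y Z u
  proof -
    let ?v = "\<lambda>i. if i = 0 then Y else u (i - 1)"
    have e: "(\<lambda>i. ?v (Suc i)) = u" by simp
    have "wedge 3 3 (contract X F) (contract Z F) ?v = A X Y Z u - wedge 3 2 (contract X F) (contract Y (contract Z F)) u"
      using wedge_rec[OF cp3[OF F] cp3[OF F], where v="?v"] by (simp add: e A_def)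
    then have "A X Y Z u = wedge 3 2 (contract X F) (contract Y (contract Z F)) u" using H3[of X Z ?v] by simp
    also have "\<dots> = A Z Y X u" unfolding A_def by (rule comm32[OF F])
    finally show ?thesis .
  qed
  have N: "A X Y Z u = - A Y X Z u" for X Y Z u
    unfolding A_def contract_swap[OF F, of Y X] by (rule wedge_uminus_left)
  have A0: "A X Y Z u = 0" for X Y Z u
    using S[of X Y Z u] N[of Z Y X u] S[of Y Z X u] N[of X Z Y u] S[of Z X Y u] N[of Y X Z u] by linarith
  have P: "\<forall>X Y Z. wedge 1 4 (contract Z (contract Y (contract X F))) F = (\<lambda>_. 0)"
  proof (intro allI ext)
    fix X Y Z u show "wedge 1 4 (contract Z (contract Y (contract X F))) F u = 0"
      using C[of Z Y X u] A0[of X Y Z u] by simp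
  qed
  have Q: "\<exists>\<theta>1 \<theta>2 \<theta>3 \<theta>4. linear \<theta>1 \<and> linear \<theta>2 \<and> linear \<theta>3 \<and> linear \<theta>4 \<and>
            F = wedge 3 1 (wedge 2 1 (wedge 1 1 (one_form \<theta>1) (one_form \<theta>2)) (one_form \<theta>3))
                  (one_form \<theta>4)"
  proof (cases "\<exists>w. F w \<noteq> 0")
    case False
    then have F0: "F = (\<lambda>_. 0)" by auto
    have l0: "linear (\<lambda>x::'a. 0::real)" by (simp add: linear_iff)
    have "F = wedge 3 1 (wedge 2 1 (wedge 1 1 (one_form (\<lambda>x. 0)) (one_form (\<lambda>x. 0))) (one_form (\<lambda>x. 0)))
                  (one_form (\<lambda>x. 0))"
      unfolding F0 by (simp add: wedge_def one_form_def)
    then show ?thesis using l0 by blast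
  next
    case True
    then obtain w where w: "F w \<noteq> 0" by auto
    define a b c d where "a = w 0" and "b = w (Suc 0)" and "c = w (Suc (Suc 0))" and "d = w (Suc (Suc (Suc 0)))"
    define s where "s = F4 F a b c d"
    have s0: "s \<noteq> 0" using w F_app4'[OF F, of w] by (simp add: s_def a_def b_def c_def d_def)
    define \<theta>1 where "\<theta>1 = (\<lambda>x. (inverse s ^ 3) * F4 F x b c d)"
    define \<theta>2 where "\<theta>2 = (\<lambda>x. F4 F a x c d)"
    define \<theta>3 where "\<theta>3 = (\<lambda>x. F4 F a b x d)"
    define \<theta>4 where "\<theta>4 = (\<lambda>x. F4 F a b c x)"
    have l1: "linear \<theta>1" unfolding \<theta>1_def by (rule linear_cmul_real, rule F4_lin0[OF F])
    have l2: "linear \<theta>2" unfolding \<theta>2_def by (rule F4_lin1[OF F])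
    have l3: "linear \<theta>3" unfolding \<theta>3_def by (rule F4_lin2[OF F])
    have l4: "linear \<theta>4" unfolding \<theta>4_def by (rule F4_lin3[OF F])
    have o1: "is_pform 1 (one_form \<theta>1)" using l1 by (rule one_form_pform)
    have o2: "is_pform 1 (one_form \<theta>2)" using l2 by (rule one_form_pform)
    have o3: "is_pform 1 (one_form \<theta>3)" using l3 by (rule one_form_pform)
    have o4: "is_pform 1 (one_form \<theta>4)" using l4 by (rule one_form_pform)
    have W1: "is_pform 2 (wedge 1 1 (one_form \<theta>1) (one_form \<theta>2))" using wedge_pform[OF o1 o2] by (simp add: numeral_eq_Suc)
    have W2: "is_pform 3 (wedge 2 1 (wedge 1 1 (one_form \<theta>1) (one_form \<theta>2)) (one_form \<theta>3))"
      using wedge_pform[OF W1 o3] by (simp add: numeral_eq_Suc)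
    have "F v = wedge 3 1 (wedge 2 1 (wedge 1 1 (one_form \<theta>1) (one_form \<theta>2)) (one_form \<theta>3)) (one_form \<theta>4) v" for v
    proof -
      let ?x0 = "v 0" and ?x1 = "v (Suc 0)" and ?x2 = "v (Suc (Suc 0))" and ?x3 = "v (Suc (Suc (Suc 0)))"
      have eH: "F4 F a b y z = (F4 F a b y d * F4 F a b c z - F4 F a b z d * F4 F a b c y) * inverse s" for y z
        using LH[OF F P, of a b c d y z] s0 by (simp add: s_def field_simps divide_inverse[symmetric])
      have eG: "F4 F a y1 y2 y3 = (F4 F a y1 c d * F4 F a b y2 y3 - F4 F a y2 c d * F4 F a b y1 y3 + F4 F a y3 c d * F4 F a b y1 y2) * inverse s" for y1 y2 y3
        using LG[OF F P, of a b c d y1 y2 y3] s0 by (simp add: s_def field_simps divide_inverse[symmetric])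
      have eF: "F4 F x0 x1 x2 x3 = (F4 F x0 b c d * F4 F a x1 x2 x3 - F4 F x1 b c d * F4 F a x0 x2 x3
           + F4 F x2 b c d * F4 F a x0 x1 x3 - F4 F x3 b c d * F4 F a x0 x1 x2) * inverse s" for x0 x1 x2 x3
        using LF[OF F P, of a b c d x0 x1 x2 x3] s0 by (simp add: s_def field_simps divide_inverse[symmetric])
      note eF1 = eF[of ?x0 ?x1 ?x2 ?x3]
      note eG1 = eG[of ?x1 ?x2 ?x3] eG[of ?x0 ?x2 ?x3] eG[of ?x0 ?x1 ?x3] eG[of ?x0 ?x1 ?x2]
      note eH1 = eH[of ?x0 ?x1] eH[of ?x0 ?x2] eH[of ?x0 ?x3] eH[of ?x1 ?x2] eH[of ?x1 ?x3] eH[of ?x2 ?x3]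
      have L: "F v = F4 F ?x0 ?x1 ?x2 ?x3" by (rule F_app4'[OF F])
      show ?thesis
        unfolding L eF1 eG1 eH1
        using W1 W2 o1 o2 o3 o4
        apply (simp add: wsimps contract_app one_form_app)
        apply (simp add: \<theta>1_def \<theta>2_def \<theta>3_def \<theta>4_def)
        apply algebra
        done
    qed
    then show ?thesis using l1 l2 l3 l4 by blast
  qed
  show ?thesis using P Q by blast
qed

end
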